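(* Let $\vec{\mathcal G}=([n],E)$ be an ergodic graph of a deterministic two-player mean-payoff game with $m=|E|$, and let the weights $(r_{ij})$ be independent absolutely continuous random variables with densities $f_{ij}$ such that $\mathbb E(r_{ij})\in[-1,1]$, $\mathrm{Var}(r_{ij})\le 1/\phi^2$ and $f_{ij}(y)\le\phi$ for all $(i,j),y$, for some $\phi>0$. Then for every $\varepsilon>0$, $$\mathbb P\Bigl(\Delta(r)\ge\frac{8m}{\varepsilon}\bigl(\phi+\sqrt{2m/\varepsilon}\bigr)\Bigr)\le\varepsilon .$$ In particular $\mathbb P\bigl(\Delta(r)\ge 8nm(\phi+\sqrt{2nm})\bigr)\le 1/n$.
   Context: Setting: directed graph $\vec{\mathcal G}=([n],E)$ without multiple edges, each vertex having an outgoing edge, $[n]=V_{\max}\uplus V_{\min}$, weights $r\in\mathbb R^E$. Ergodic equation in $(\lambda,u)$: $\lambda+u_i=\max_{(i,j)\in E}\{r_{ij}+u_j\}$ ($i\in V_{\max}$), $\lambda+u_i=\min_{(i,j)\in E}\{r_{ij}+u_j\}$ ($i\in V_{\min}$); $u$ is a bias if $(\lambda,u)$ solves it; ergodic graph: solvable for every $r$, in which case $\lambda$ (the value) is unique. A pair of policies (choices of outgoing edges at Max/Min vertices) is bias-induced if some bias makes each chosen edge attain the max/min. $\Xi$: pairs whose induced subgraph has exactly one directed cycle; $\mathcal P^{\sigma,\tau}$: set of $r$ for which $(\sigma,\tau)$ is the only bias-induced pair; $\mathcal U=\bigcup_\Xi\mathcal P^{\sigma,\tau}$ (its complement has measure zero,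 and for $r\in\mathcal U$ the bias is unique up to an additive constant). Condition number, for $r\in\mathcal U$: $\Delta(r)=\dfrac{\max\{|r_{ij}-\lambda|:(i,j)\in E\}}{\min\{|r_{ij}-\lambda+u_j-u_i|:(i,j)\in E,\ r_{ij}-\lambda+u_j-u_i\ne0\}}$, with $\lambda$ the value and $u$ a bias; by convention $\Delta(r)=1$ if the denominator's set is empty (only one pair of policies). *)

theory Defs
  imports "HOL-Probability.Probability"
begin

text \<open>Vertices are [n] = {1..n}; edges E are pairs of vertices; weights are functions
  r :: nat \<times> nat \<Rightarrow> real (only the values on E matter).
  Vmax \<subseteq> [n]; Vmin = [n] - Vmax.\<close>

definition game_graph :: "nat \<Rightarrow> (nat \<times> nat) set \<Rightarrow> nat set \<Rightarrow> bool" where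
  "game_graph n E Vmax \<longleftrightarrow> E \<subseteq> {1..n} \<times> {1..n} \<and> (\<forall>i\<in>{1..n}. \<exists>j. (i, j) \<in> E)
     \<and> Vmax \<subseteq> {1..n}"

definition ergodic_eq :: "nat \<Rightarrow> (nat \<times> nat) set \<Rightarrow> nat set \<Rightarrow> (nat \<times> nat \<Rightarrow> real)
     \<Rightarrow> real \<Rightarrow> (nat \<Rightarrow> real) \<Rightarrow> bool" where
  "ergodic_eq n E Vmax r lam u \<longleftrightarrow>
     (\<forall>i\<in>{1..n}. (i \<in> Vmax \<longrightarrow> lam + u i = Max {r (i, j) + u j | j. (i, j) \<in> E})
               \<and> (i \<notin> Vmax \<longrightarrow> lam + u i = Min {r (i, j) + u j | j. (i, j) \<in> E}))"

definition is_bias :: "nat \<Rightarrow> (nat \<times> nat) set \<Rightarrow> nat set \<Rightarrow> (nat \<times> nat \<Rightarrow> real)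
     \<Rightarrow> (nat \<Rightarrow> real) \<Rightarrow> bool" where
  "is_bias n E Vmax r u \<longleftrightarrow> (\<exists>lam. ergodic_eq n E Vmax r lam u)"

definition ergodic_graph :: "nat \<Rightarrow> (nat \<times> nat) set \<Rightarrow> nat set \<Rightarrow> bool" where
  "ergodic_graph n E Vmax \<longleftrightarrow> (\<forall>r. \<exists>lam u. ergodic_eq n E Vmax r lam u)"

definition game_value :: "nat \<Rightarrow> (nat \<times> nat) set \<Rightarrow> nat set \<Rightarrow> (nat \<times> nat \<Rightarrow> real) \<Rightarrow> real" where
  "game_value n E Vmax r = (THE lam. \<exists>u. ergodic_eq n E Vmax r lam u)"

text \<open>A pair of policies (sigma on Vmax, tau on Vmin) is encoded as one choice function s
  with (i, s i) \<in> E for every vertex i (sigma = s on Vmax, tau = s on Vmin);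
  s is normalized to 0 outside [n] so that pairs correspond bijectively to such s.\<close>
definition policy_pair :: "nat \<Rightarrow> (nat \<times> nat) set \<Rightarrow> (nat \<Rightarrow> nat) \<Rightarrow> bool" where
  "policy_pair n E s \<longleftrightarrow> (\<forall>i\<in>{1..n}. (i, s i) \<in> E) \<and> (\<forall>i. i \<notin> {1..n} \<longrightarrow> s i = 0)"

definition bias_induced :: "nat \<Rightarrow> (nat \<times> nat) set \<Rightarrow> nat set \<Rightarrow> (nat \<times> nat \<Rightarrow> real)
     \<Rightarrow> (nat \<Rightarrow> nat) \<Rightarrow> bool" where
  "bias_induced n E Vmax r s \<longleftrightarrow> policy_pair n E s \<and>
     (\<exists>lam u. ergodic_eq n E Vmax r lam u \<and> (\<forall>i\<in>{1..n}. lam + u i = r (i, s i) + u (s i)))"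

definition directed_cycle :: "(nat \<times> nat) set \<Rightarrow> (nat \<times> nat) set \<Rightarrow> bool" where
  "directed_cycle F C \<longleftrightarrow> (\<exists>vs. vs \<noteq> [] \<and> distinct vs \<and>
     (\<forall>k<length vs. (vs ! k, vs ! ((k + 1) mod length vs)) \<in> F) \<and>
     C = {(vs ! k, vs ! ((k + 1) mod length vs)) | k. k < length vs})"

definition policy_subgraph :: "nat \<Rightarrow> (nat \<Rightarrow> nat) \<Rightarrow> (nat \<times> nat) set" where
  "policy_subgraph n s = {(i, s i) | i. i \<in> {1..n}}"

definition Xi :: "nat \<Rightarrow> (nat \<times> nat) set \<Rightarrow> (nat \<Rightarrow> nat) set" where
  "Xi n E = {s. policy_pair n E s \<and> (\<exists>!C. directed_cycle (policy_subgraph n s) C)}"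

definition P_pol :: "nat \<Rightarrow> (nat \<times> nat) set \<Rightarrow> nat set \<Rightarrow> (nat \<Rightarrow> nat)
     \<Rightarrow> (nat \<times> nat \<Rightarrow> real) set" where
  "P_pol n E Vmax s = {r. bias_induced n E Vmax r s \<and>
       (\<forall>s'. bias_induced n E Vmax r s' \<longrightarrow> s' = s)}"

definition U_set :: "nat \<Rightarrow> (nat \<times> nat) set \<Rightarrow> nat set \<Rightarrow> (nat \<times> nat \<Rightarrow> real) set" where
  "U_set n E Vmax = (\<Union>s\<in>Xi n E. P_pol n E Vmax s)"

text \<open>Condition number (meaningful for r in U, where the bias is unique up to constants).\<close>
definition cond_number :: "nat \<Rightarrow> (nat \<times> nat) set \<Rightarrow> nat set \<Rightarrow> (nat \<times> nat \<Rightarrow> real) \<Rightarrow> real" where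
  "cond_number n E Vmax r =
     (let lam = game_value n E Vmax r;
          u = (SOME u. ergodic_eq n E Vmax r lam u);
          S = {\<bar>r (i, j) - lam + u j - u i\<bar> | i j. (i, j) \<in> E \<and> r (i, j) - lam + u j - u i \<noteq> 0}
      in if S = {} then 1 else Max {\<bar>r e - lam\<bar> | e. e \<in> E} / Min S)"

end

theory Submission
  imports Defs
begin

definition ptight :: "nat \<Rightarrow> (nat \<Rightarrow> nat) \<Rightarrow> (nat \<times> nat \<Rightarrow> real) \<Rightarrow> real \<Rightarrow> (nat \<Rightarrow> real) \<Rightarrow> bool" where
  "ptight n s r l u \<longleftrightarrow> (\<forall>i\<in>{1..n}. l + u i = r (i, s i) + u (s i))"

definition ineqs :: "(nat \<times> nat) set \<Rightarrow> nat set \<Rightarrow> (nat \<times> nat \<Rightarrow> real) \<Rightarrow> real \<Rightarrow> (nat \<Rightarrow> real) \<Rightarrow> bool" where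
  "ineqs E Vmax r l u \<longleftrightarrow> (\<forall>i j. (i,j)\<in>E \<longrightarrow> (i\<in>Vmax \<longrightarrow> r(i,j)+u j \<le> l + u i) \<and> (i\<notin>Vmax \<longrightarrow> l + u i \<le> r(i,j) + u j))"

lemma gg_fin: assumes "game_graph n E Vmax" shows "finite E"
  using assms unfolding game_graph_def by (meson finite_SigmaI finite_atLeastAtMost finite_subset)

lemma gg_edge: assumes "game_graph n E Vmax" "(i,j)\<in>E" shows "i\<in>{1..n}" "j\<in>{1..n}"
  using assms unfolding game_graph_def by auto

lemma succ_set_fin: assumes "game_graph n E Vmax"
  shows "finite {r (i, j) + u j | j. (i, j) \<in> E}"
proof -
  have "{r (i, j) + u j | j. (i, j) \<in> E} = (\<lambda>j. r (i,j) + u j) ` {j. (i,j)\<in>E}" by auto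
  moreover have "{j. (i,j)\<in>E} \<subseteq> {1..n}" using gg_edge[OF assms] by auto
  ultimately show ?thesis by (metis finite_atLeastAtMost finite_imageI finite_subset)
qed

lemma succ_set_ne: assumes "game_graph n E Vmax" "i\<in>{1..n}"
  shows "{r (i, j) + u j | j. (i, j) \<in> E} \<noteq> {}"
  using assms unfolding game_graph_def by auto

lemma ergodic_iff:
  assumes gg: "game_graph n E Vmax"
  shows "ergodic_eq n E Vmax r l u \<longleftrightarrow> ineqs E Vmax r l u \<and>
     (\<forall>i\<in>{1..n}. \<exists>j. (i,j)\<in>E \<and> l + u i = r(i,j) + u j)"
proof
  assume h: "ergodic_eq n E Vmax r l u"
  show "ineqs E Vmax r l u \<and> (\<forall>i\<in>{1..n}. \<exists>j. (i,j)\<in>E \<and> l + u i = r(i,j) + u j)"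
  proof
    show "ineqs E Vmax r l u" unfolding ineqs_def
    proof (intro allI impI conjI)
      fix i j assume e: "(i,j)\<in>E"
      have iV: "i\<in>{1..n}" using gg_edge[OF gg e] by simp
      have fin: "finite {r (i, j) + u j | j. (i, j) \<in> E}" by (rule succ_set_fin[OF gg])
      have mem: "r(i,j) + u j \<in> {r (i, j) + u j | j. (i, j) \<in> E}" using e by auto
      { assume "i\<in>Vmax" then have "l + u i = Max {r (i, j) + u j | j. (i, j) \<in> E}" using h iV unfolding ergodic_eq_def by blast
        then show "r(i,j)+u j \<le> l + u i" using Max_ge[OF fin mem] by simp }
      { assume "i\<notin>Vmax" then have "l + u i = Min {r (i, j) + u j | j. (i, j) \<in> E}" using h iV unfolding ergodic_eq_def by blast
        then show "l + u i \<le> r(i,j)+u j" using Min_le[OF fin mem] by simp }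
    qed
    show "\<forall>i\<in>{1..n}. \<exists>j. (i,j)\<in>E \<and> l + u i = r(i,j) + u j"
    proof
      fix i assume iV: "i\<in>{1..n}"
      have fin: "finite {r (i, j) + u j | j. (i, j) \<in> E}" by (rule succ_set_fin[OF gg])
      have ne: "{r (i, j) + u j | j. (i, j) \<in> E} \<noteq> {}" by (rule succ_set_ne[OF gg iV])
      show "\<exists>j. (i,j)\<in>E \<and> l + u i = r(i,j) + u j"
      proof (cases "i\<in>Vmax")
        case True
        then have "l + u i = Max {r (i, j) + u j | j. (i, j) \<in> E}" using h iV unfolding ergodic_eq_def by blast
        moreover have "Max {r (i, j) + u j | j. (i, j) \<in> E} \<in> {r (i, j) + u j | j. (i, j) \<in> E}" using Max_in[OF fin ne] .
        ultimately show ?thesis by auto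
      next
        case False
        then have "l + u i = Min {r (i, j) + u j | j. (i, j) \<in> E}" using h iV unfolding ergodic_eq_def by blast
        moreover have "Min {r (i, j) + u j | j. (i, j) \<in> E} \<in> {r (i, j) + u j | j. (i, j) \<in> E}" using Min_in[OF fin ne] .
        ultimately show ?thesis by auto
      qed
    qed
  qed
next
  assume h: "ineqs E Vmax r l u \<and> (\<forall>i\<in>{1..n}. \<exists>j. (i,j)\<in>E \<and> l + u i = r(i,j) + u j)"
  show "ergodic_eq n E Vmax r l u" unfolding ergodic_eq_def
  proof (intro ballI conjI impI)
    fix i assume iV: "i\<in>{1..n}"
    have fin: "finite {r (i, j) + u j | j. (i, j) \<in> E}" by (rule succ_set_fin[OF gg])
    obtain j0 where j0: "(i,j0)\<in>E" "l + u i = r(i,j0) + u j0" using h iV by blast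
    have mem: "l + u i \<in> {r (i, j) + u j | j. (i, j) \<in> E}" using j0 by auto
    { assume iM: "i\<in>Vmax"
      show "l + u i = Max {r (i, j) + u j | j. (i, j) \<in> E}"
      proof (rule Max_eqI[symmetric, OF fin _ mem])
        fix y assume "y \<in> {r (i, j) + u j | j. (i, j) \<in> E}"
        then show "y \<le> l + u i" using h iM unfolding ineqs_def by auto
      qed }
    { assume iM: "i\<notin>Vmax"
      show "l + u i = Min {r (i, j) + u j | j. (i, j) \<in> E}"
      proof (rule Min_eqI[symmetric, OF fin _ mem])
        fix y assume "y \<in> {r (i, j) + u j | j. (i, j) \<in> E}"
        then show "l + u i \<le> y" using h iM unfolding ineqs_def by auto
      qed }
  qed
qed

lemma tight_ergodic:
  assumes gg: "game_graph n E Vmax" and pp: "policy_pair n E s" and t: "ptight n s r l u"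
    and iq: "ineqs E Vmax r l u"
  shows "ergodic_eq n E Vmax r l u"
  unfolding ergodic_iff[OF gg] using pp t iq unfolding policy_pair_def ptight_def by blast

lemma ergodic_policy:
  assumes gg: "game_graph n E Vmax" and h: "ergodic_eq n E Vmax r l u"
  shows "\<exists>s. policy_pair n E s \<and> ptight n s r l u"
proof -
  have ex: "\<forall>i\<in>{1..n}. \<exists>j. (i,j)\<in>E \<and> l + u i = r(i,j) + u j" using h ergodic_iff[OF gg] by blast
  define s where "s i = (if i\<in>{1..n} then (SOME j. (i,j)\<in>E \<and> l + u i = r(i,j) + u j) else 0)" for i
  have "\<forall>i\<in>{1..n}. (i, s i)\<in>E \<and> l + u i = r(i,s i) + u (s i)"
  proof
    fix i assume iV: "i\<in>{1..n}"
    then have "\<exists>j. (i,j)\<in>E \<and> l + u i = r(i,j) + u j" using ex by blast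
    then have "(i, SOME j. (i,j)\<in>E \<and> l + u i = r(i,j) + u j)\<in>E \<and> l + u i = r(i,SOME j. (i,j)\<in>E \<and> l + u i = r(i,j) + u j) + u (SOME j. (i,j)\<in>E \<and> l + u i = r(i,j) + u j)"
      by (rule someI_ex)
    then show "(i, s i)\<in>E \<and> l + u i = r(i,s i) + u (s i)" using iV unfolding s_def by simp
  qed
  moreover have "\<forall>i. i \<notin> {1..n} \<longrightarrow> s i = 0" by (simp add: s_def)
  ultimately show ?thesis unfolding policy_pair_def ptight_def by blast
qed

lemma ergodic_shift:
  assumes gg: "game_graph n E Vmax" and h: "ergodic_eq n E Vmax r l u"
    and eq: "\<forall>i\<in>{1..n}. u' i = u i + c"
  shows "ergodic_eq n E Vmax r l u'"
proof -
  have hh: "ineqs E Vmax r l u \<and> (\<forall>i\<in>{1..n}. \<exists>j. (i,j)\<in>E \<and> l + u i = r(i,j) + u j)"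
    using h ergodic_iff[OF gg] by blast
  have "ineqs E Vmax r l u'" using hh eq gg_edge[OF gg] unfolding ineqs_def
    by (smt (verit, best))
  moreover have "\<forall>i\<in>{1..n}. \<exists>j. (i,j)\<in>E \<and> l + u' i = r(i,j) + u' j"
    using hh eq gg_edge[OF gg] by (smt (verit, best))
  ultimately show ?thesis using ergodic_iff[OF gg] by blast
qed

lemma value_unique_le:
  assumes gg: "game_graph n E Vmax" and n1: "n \<ge> 1"
    and h1: "ergodic_eq n E Vmax r l u" and h2: "ergodic_eq n E Vmax r l' u'"
  shows "l \<le> l'"
proof -
  have fV: "finite ((\<lambda>i. u i - u' i) ` {1..n})" by simp
  have neV: "(\<lambda>i. u i - u' i) ` {1..n} \<noteq> {}" using n1 by auto
  obtain i where iV: "i\<in>{1..n}" and imax: "\<forall>k\<in>{1..n}. u k - u' k \<le> u i - u' i"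
    using Max_in[OF fV neV] Max_ge[OF fV] by fastforce
  have a1: "ineqs E Vmax r l u" "\<forall>i\<in>{1..n}. \<exists>j. (i,j)\<in>E \<and> l + u i = r(i,j) + u j"
    using h1 ergodic_iff[OF gg] by blast+
  have a2: "ineqs E Vmax r l' u'" "\<forall>i\<in>{1..n}. \<exists>j. (i,j)\<in>E \<and> l' + u' i = r(i,j) + u' j"
    using h2 ergodic_iff[OF gg] by blast+
  show ?thesis
  proof (cases "i\<in>Vmax")
    case True
    obtain j where j: "(i,j)\<in>E" "l + u i = r(i,j) + u j" using a1(2) iV by blast
    have jV: "j\<in>{1..n}" using gg_edge[OF gg j(1)] by simp
    have "r(i,j)+u' j \<le> l' + u' i" using a2(1) j(1) True unfolding ineqs_def by blast
    moreover have "u j - u' j \<le> u i - u' i" using imax jV by blast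
    ultimately show ?thesis using j(2) by linarith
  next
    case False
    obtain j where j: "(i,j)\<in>E" "l' + u' i = r(i,j) + u' j" using a2(2) iV by blast
    have jV: "j\<in>{1..n}" using gg_edge[OF gg j(1)] by simp
    have "l + u i \<le> r(i,j)+u j" using a1(1) j(1) False unfolding ineqs_def by blast
    moreover have "u j - u' j \<le> u i - u' i" using imax jV by blast
    ultimately show ?thesis using j(2) by linarith
  qed
qed

lemma value_unique:
  assumes gg: "game_graph n E Vmax" and n1: "n \<ge> 1"
    and h1: "ergodic_eq n E Vmax r l u" and h2: "ergodic_eq n E Vmax r l' u'"
  shows "l = l'"
  using value_unique_le[OF gg n1 h1 h2] value_unique_le[OF gg n1 h2 h1] by simp

lemma game_value_eq:
  assumes gg: "game_graph n E Vmax" and n1: "n \<ge> 1"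
    and h1: "ergodic_eq n E Vmax r l u"
  shows "game_value n E Vmax r = l"
  unfolding game_value_def
  by (rule the_equality) (use h1 value_unique[OF gg n1] in blast)+

lemma pp_V: assumes gg: "game_graph n E Vmax" and pp: "policy_pair n E s" and iV: "i\<in>{1..n}"
  shows "s i \<in> {1..n}" "(i, s i) \<in> E"
  using pp iV gg_edge[OF gg] unfolding policy_pair_def by blast+

lemma orbit_V: assumes gg: "game_graph n E Vmax" and pp: "policy_pair n E s" and iV: "i\<in>{1..n}"
  shows "(s^^t) i \<in> {1..n}"
proof (induction t)
  case 0 show ?case using iV by simp
next
  case (Suc t) then show ?case using pp_V(1)[OF gg pp] by simp
qed

lemma periodic_point:
  assumes gg: "game_graph n E Vmax" and pp: "policy_pair n E s" and iV: "i\<in>{1..n}"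
  shows "\<exists>p k. 0 < k \<and> (s^^k) ((s^^p) i) = (s^^p) i"
proof -
  have "\<not> inj_on (\<lambda>t. (s^^t) i) {0..n}"
  proof
    assume inj: "inj_on (\<lambda>t. (s^^t) i) {0..n}"
    have "(\<lambda>t. (s^^t) i) ` {0..n} \<subseteq> {1..n}" using orbit_V[OF gg pp iV] by auto
    then have "card ((\<lambda>t. (s^^t) i) ` {0..n}) \<le> card {1..n}" by (rule card_mono[OF finite_atLeastAtMost])
    moreover have "card ((\<lambda>t. (s^^t) i) ` {0..n}) = n + 1" using card_image[OF inj] by simp
    ultimately show False by simp
  qed
  then obtain p q where pq: "p \<in> {0..n}" "q\<in>{0..n}" "p \<noteq> q" "(s^^p) i = (s^^q) i"
    unfolding inj_on_def by blast
  show ?thesis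
  proof (cases "p < q")
    case True
    have "(s^^(q-p)) ((s^^p) i) = (s^^(q-p+p)) i" by (simp add: funpow_add)
    also have "q-p+p = q" using True by simp
    finally have "(s^^(q-p)) ((s^^p) i) = (s^^q) i" .
    then show ?thesis using True pq(4) by (intro exI[of _ p] exI[of _ "q-p"]) auto
  next
    case False
    then have "q < p" using pq(3) by simp
    have "(s^^(p-q)) ((s^^q) i) = (s^^(p-q+q)) i" by (simp add: funpow_add)
    also have "p-q+q = p" using \<open>q<p\<close> by simp
    finally have "(s^^(p-q)) ((s^^q) i) = (s^^p) i" .
    then show ?thesis using \<open>q<p\<close> pq(4) by (intro exI[of _ q] exI[of _ "p-q"]) auto
  qed
qed

lemma cycle_of_periodic:
  assumes gg: "game_graph n E Vmax" and pp: "policy_pair n E s" and yV: "y\<in>{1..n}"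
    and k: "0 < k" "(s^^k) y = y"
  shows "\<exists>C. directed_cycle (policy_subgraph n s) C \<and> (\<forall>c c'. (c,c')\<in>C \<longrightarrow> (\<exists>t. c = (s^^t) y))"
proof -
  define k0 where "k0 = (LEAST k. 0 < k \<and> (s^^k) y = y)"
  have k0: "0 < k0" "(s^^k0) y = y" using LeastI[of "\<lambda>k. 0 < k \<and> (s^^k) y = y", OF conjI[OF k]] unfolding k0_def by auto
  have k0min: "\<And>j. 0 < j \<Longrightarrow> j < k0 \<Longrightarrow> (s^^j) y \<noteq> y" unfolding k0_def using not_less_Least by blast
  define vs where "vs = map (\<lambda>t. (s^^t) y) [0..<k0]"
  have len: "length vs = k0" unfolding vs_def by simp
  have nth: "\<And>t. t < k0 \<Longrightarrow> vs ! t = (s^^t) y" unfolding vs_def by simp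
  have nxt: "\<And>t. t < k0 \<Longrightarrow> vs ! ((t+1) mod k0) = s ((s^^t) y)"
  proof -
    fix t assume t: "t < k0"
    show "vs ! ((t+1) mod k0) = s ((s^^t) y)"
    proof (cases "t + 1 < k0")
      case True then show ?thesis using nth by simp
    next
      case False then have "t + 1 = k0" using t by simp
      then have "(t+1) mod k0 = 0" by simp
      moreover have "s ((s^^t) y) = (s^^k0) y" using \<open>t+1 = k0\<close> by (metis Suc_eq_plus1 comp_apply funpow.simps(2))
      ultimately show ?thesis using nth k0 by simp
    qed
  qed
  have dist: "distinct vs"
    unfolding distinct_conv_nth len
  proof (intro allI impI)
    fix i j assume ij: "i < k0" "j < k0" "i \<noteq> j"
    show "vs ! i \<noteq> vs ! j"
    proof
      assume eq: "vs ! i = vs ! j"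
      { fix a b assume ab: "a < b" "b < k0" "(s^^a) y = (s^^b) y"
        have "(s^^(k0 - b + a)) y = (s^^(k0-b)) ((s^^a) y)" by (simp add: funpow_add)
        also have "\<dots> = (s^^(k0-b)) ((s^^b) y)" using ab by simp
        also have "\<dots> = (s^^(k0-b+b)) y" by (simp add: funpow_add)
        also have "k0-b+b = k0" using ab by simp
        finally have fy: "(s^^(k0 - b + a)) y = y" using k0 by simp
        have "0 < k0 - b + a" "k0 - b + a < k0" using ab(1,2) by auto
        then have False using k0min fy by simp }
      note ab_all = this
      show False
      proof (cases "i < j")
        case True
        have "(s^^i) y = (s^^j) y" using eq nth[OF ij(1)] nth[OF ij(2)] by simp
        then show False using ab_all[OF True ij(2)] by blast
      next
        case False then have ji: "j < i" using ij by simp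
        have "(s^^j) y = (s^^i) y" using eq nth[OF ij(1)] nth[OF ij(2)] by simp
        then show False using ab_all[OF ji ij(1)] by blast
      qed
    qed
  qed
  define C where "C = {(vs!t, vs!((t+1) mod length vs)) | t. t < length vs}"
  have "directed_cycle (policy_subgraph n s) C"
    unfolding directed_cycle_def
  proof (intro exI[of _ vs] conjI)
    show "vs \<noteq> []" using len k0 by auto
    show "distinct vs" by fact
    show "\<forall>t<length vs. (vs ! t, vs ! ((t + 1) mod length vs)) \<in> policy_subgraph n s"
    proof (intro allI impI)
      fix t assume "t < length vs"
      then have t: "t < k0" using len by simp
      have "(s^^t) y \<in> {1..n}" using orbit_V[OF gg pp yV] .
      then show "(vs ! t, vs ! ((t + 1) mod length vs)) \<in> policy_subgraph n s"
        using nth[OF t] nxt[OF t] len unfolding policy_subgraph_def by auto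
    qed
    show "C = {(vs!t, vs!((t+1) mod length vs)) | t. t < length vs}" by (simp add: C_def)
  qed
  moreover have "\<forall>c c'. (c,c')\<in>C \<longrightarrow> (\<exists>t. c = (s^^t) y)"
  proof (intro allI impI)
    fix c c' assume "(c,c')\<in>C"
    then obtain t where "t < length vs" "c = vs ! t" unfolding C_def by blast
    then show "\<exists>t. c = (s^^t) y" using nth len by auto
  qed
  ultimately show ?thesis by blast
qed

lemma Xi_struct:
  assumes gg: "game_graph n E Vmax" and sX: "s \<in> Xi n E"
  shows "\<exists>c L. c\<in>{1..n} \<and> 0 < L \<and> (s^^L) c = c \<and> (\<forall>i\<in>{1..n}. \<exists>t. (s^^t) i = c)"
proof -
  have pp: "policy_pair n E s" using sX unfolding Xi_def by simp
  obtain C where C: "directed_cycle (policy_subgraph n s) C"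
     and Cu: "\<And>C'. directed_cycle (policy_subgraph n s) C' \<Longrightarrow> C' = C"
    using sX unfolding Xi_def by blast
  obtain vs where vs: "vs \<noteq> []" "\<forall>k<length vs. (vs ! k, vs ! ((k + 1) mod length vs)) \<in> policy_subgraph n s"
     "C = {(vs ! k, vs ! ((k + 1) mod length vs)) | k. k < length vs}"
    using C unfolding directed_cycle_def by blast
  define c where "c = vs ! 0"
  define c' where "c' = vs ! ((0 + 1) mod length vs)"
  have cC: "(c, c') \<in> C" using vs unfolding c_def c'_def by auto
  have "(c,c') \<in> policy_subgraph n s" using vs unfolding c_def c'_def by auto
  then have cV: "c \<in> {1..n}" unfolding policy_subgraph_def by auto
  have reach: "\<forall>i\<in>{1..n}. \<exists>t. (s^^t) i = c"
  proof
    fix i assume iV: "i\<in>{1..n}"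
    obtain p k where pk: "0 < k" "(s^^k) ((s^^p) i) = (s^^p) i" using periodic_point[OF gg pp iV] by blast
    obtain C' where C': "directed_cycle (policy_subgraph n s) C'" "\<forall>c c'. (c,c')\<in>C' \<longrightarrow> (\<exists>t. c = (s^^t) ((s^^p) i))"
      using cycle_of_periodic[OF gg pp orbit_V[OF gg pp iV] pk] by blast
    have "C' = C" using Cu C'(1) by blast
    then obtain t where "c = (s^^t) ((s^^p) i)" using C'(2) cC by blast
    then have "(s^^(t+p)) i = c" by (simp add: funpow_add)
    then show "\<exists>t. (s^^t) i = c" by blast
  qed
  obtain t where t: "(s^^t) (s c) = c" using reach pp_V[OF gg pp cV] by blast
  have "(s^^(Suc t)) c = c" using t by (metis comp_apply funpow_Suc_right)
  then show ?thesis using cV reach by blast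
qed

definition cycdata :: "nat \<Rightarrow> (nat \<Rightarrow> nat) \<Rightarrow> nat \<times> nat" where
  "cycdata n s = (SOME p. fst p \<in> {1..n} \<and> 0 < snd p \<and> (s^^(snd p)) (fst p) = fst p \<and> (\<forall>i\<in>{1..n}. \<exists>t. (s^^t) i = fst p))"

definition cc :: "nat \<Rightarrow> (nat \<Rightarrow> nat) \<Rightarrow> nat" where "cc n s = fst (cycdata n s)"
definition LL :: "nat \<Rightarrow> (nat \<Rightarrow> nat) \<Rightarrow> nat" where "LL n s = snd (cycdata n s)"

definition cm :: "nat \<Rightarrow> (nat \<Rightarrow> nat) \<Rightarrow> (nat \<times> nat \<Rightarrow> real) \<Rightarrow> real" where
  "cm n s r = (\<Sum>t<LL n s. r ((s^^t) (cc n s), s ((s^^t) (cc n s)))) / real (LL n s)"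

definition hit :: "nat \<Rightarrow> (nat \<Rightarrow> nat) \<Rightarrow> nat \<Rightarrow> nat" where
  "hit n s i = (LEAST t. (s^^t) i = cc n s)"

definition ps :: "nat \<Rightarrow> (nat \<Rightarrow> nat) \<Rightarrow> (nat \<times> nat \<Rightarrow> real) \<Rightarrow> nat \<Rightarrow> real" where
  "ps n s r i = (\<Sum>t<hit n s i. r ((s^^t) i, s ((s^^t) i)) - cm n s r)"

lemma cyc_prop:
  assumes gg: "game_graph n E Vmax" and sX: "s \<in> Xi n E"
  shows "cc n s \<in> {1..n}" "0 < LL n s" "(s^^(LL n s)) (cc n s) = cc n s"
        "\<forall>i\<in>{1..n}. \<exists>t. (s^^t) i = cc n s"
proof -
  obtain c L where cL: "c\<in>{1..n} \<and> 0 < L \<and> (s^^L) c = c \<and> (\<forall>i\<in>{1..n}. \<exists>t. (s^^t) i = c)"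
    using Xi_struct[OF gg sX] by blast
  let ?P = "\<lambda>p. fst p \<in> {1..n} \<and> 0 < snd p \<and> (s^^(snd p)) (fst p) = fst p \<and> (\<forall>i\<in>{1..n}. \<exists>t. (s^^t) i = fst p)"
  have "?P (c,L)" using cL by simp
  then have "?P (cycdata n s)" unfolding cycdata_def by (rule someI)
  then show "cc n s \<in> {1..n}" "0 < LL n s" "(s^^(LL n s)) (cc n s) = cc n s"
        "\<forall>i\<in>{1..n}. \<exists>t. (s^^t) i = cc n s" unfolding cc_def LL_def by blast+
qed

lemma hit_prop:
  assumes gg: "game_graph n E Vmax" and sX: "s \<in> Xi n E" and iV: "i\<in>{1..n}"
  shows "(s^^(hit n s i)) i = cc n s"
  unfolding hit_def using cyc_prop(4)[OF gg sX] iV by (meson LeastI)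

lemma tight_formula:
  assumes gg: "game_graph n E Vmax" and sX: "s \<in> Xi n E" and t: "ptight n s r l u"
  shows "l = cm n s r" "\<forall>i\<in>{1..n}. u i = ps n s r i + u (cc n s)"
proof -
  have pp: "policy_pair n E s" using sX unfolding Xi_def by simp
  have g: "\<And>x. x\<in>{1..n} \<Longrightarrow> r (x, s x) = l - (u (s x) - u x)" using t unfolding ptight_def by force
  let ?c = "cc n s" and ?L = "LL n s"
  have cV: "?c \<in> {1..n}" and L0: "0 < ?L" and Lc: "(s^^?L) ?c = ?c" using cyc_prop[OF gg sX] by auto
  have "(\<Sum>t<?L. r ((s^^t) ?c, s ((s^^t) ?c))) = (\<Sum>t<?L. l - (u ((s^^(Suc t)) ?c) - u ((s^^t) ?c)))"
    by (rule sum.cong) (use g orbit_V[OF gg pp cV] in auto)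
  also have "\<dots> = real ?L * l - (\<Sum>t<?L. u ((s^^(Suc t)) ?c) - u ((s^^t) ?c))"
    by (simp add: sum_subtractf)
  also have "(\<Sum>t<?L. u ((s^^(Suc t)) ?c) - u ((s^^t) ?c)) = u ((s^^?L) ?c) - u ((s^^0) ?c)"
    by (rule sum_lessThan_telescope)
  also have "\<dots> = 0" using Lc by simp
  finally have "(\<Sum>t<?L. r ((s^^t) ?c, s ((s^^t) ?c))) = real ?L * l" by simp
  then show lcm: "l = cm n s r" unfolding cm_def using L0 by simp
  show "\<forall>i\<in>{1..n}. u i = ps n s r i + u (cc n s)"
  proof
    fix i assume iV: "i\<in>{1..n}"
    have "ps n s r i = (\<Sum>t<hit n s i. - (u ((s^^(Suc t)) i) - u ((s^^t) i)))"
      unfolding ps_def lcm[symmetric]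
      by (rule sum.cong) (use g orbit_V[OF gg pp iV] in auto)
    also have "\<dots> = - (\<Sum>t<hit n s i. u ((s^^(Suc t)) i) - u ((s^^t) i))"
      by (simp add: sum_negf[symmetric])
    also have "(\<Sum>t<hit n s i. u ((s^^(Suc t)) i) - u ((s^^t) i)) = u ((s^^(hit n s i)) i) - u ((s^^0) i)"
      by (rule sum_lessThan_telescope)
    finally show "u i = ps n s r i + u (cc n s)" using hit_prop[OF gg sX iV] by simp
  qed
qed

lemma formula_cong:
  assumes gg: "game_graph n E Vmax" and sX: "s \<in> Xi n E"
    and eq: "\<forall>i\<in>{1..n}. r (i, s i) = r' (i, s i)"
  shows "cm n s r = cm n s r'" "\<forall>i\<in>{1..n}. ps n s r i = ps n s r' i"
proof -
  have pp: "policy_pair n E s" using sX unfolding Xi_def by simp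
  have cV: "cc n s \<in> {1..n}" using cyc_prop[OF gg sX] by auto
  show c: "cm n s r = cm n s r'" unfolding cm_def
    using eq orbit_V[OF gg pp cV] by (intro arg_cong2[where f="(/)"] sum.cong) auto
  show "\<forall>i\<in>{1..n}. ps n s r i = ps n s r' i"
  proof
    fix i assume iV: "i\<in>{1..n}"
    show "ps n s r i = ps n s r' i" unfolding ps_def c
      using eq orbit_V[OF gg pp iV] by (intro sum.cong) auto
  qed
qed

definition Qs :: "nat \<Rightarrow> (nat \<times> nat) set \<Rightarrow> nat set \<Rightarrow> (nat \<Rightarrow> nat) \<Rightarrow> (nat \<times> nat \<Rightarrow> real) \<Rightarrow> bool" where
  "Qs n E Vmax s r \<longleftrightarrow> ptight n s r (cm n s r) (ps n s r) \<and> ineqs E Vmax r (cm n s r) (ps n s r)"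

definition theta :: "nat \<Rightarrow> (nat \<Rightarrow> nat) \<Rightarrow> nat \<times> nat \<Rightarrow> (nat \<times> nat \<Rightarrow> real) \<Rightarrow> real" where
  "theta n s e r = cm n s r + ps n s r (fst e) - ps n s r (snd e)"

definition Good :: "nat \<Rightarrow> (nat \<times> nat) set \<Rightarrow> nat \<times> nat \<Rightarrow> (nat \<Rightarrow> nat) set" where
  "Good n E e = {s \<in> Xi n E. s (fst e) \<noteq> snd e}"

definition Bset :: "nat \<Rightarrow> (nat \<times> nat) set \<Rightarrow> nat set \<Rightarrow> real \<Rightarrow> nat \<times> nat \<Rightarrow> (nat \<times> nat \<Rightarrow> real) \<Rightarrow> bool" where
  "Bset n E Vmax \<delta> e r \<longleftrightarrow> (\<exists>s\<in>Good n E e. Qs n E Vmax s r \<and> 0 < \<bar>r e - theta n s e r\<bar> \<and> \<bar>r e - theta n s e r\<bar> < \<delta>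
      \<and> (\<forall>s'\<in>Good n E e. s' \<noteq> s \<longrightarrow> \<not> Qs n E Vmax s' r))"

lemma cover_key:
  assumes gg: "game_graph n E Vmax" and n1: "n \<ge> 1" and sX: "s \<in> Xi n E"
    and rP: "r \<in> P_pol n E Vmax s"
  defines "lam \<equiv> game_value n E Vmax r"
  defines "u \<equiv> SOME u. ergodic_eq n E Vmax r lam u"
  shows "lam = cm n s r" "\<forall>i\<in>{1..n}. u i = ps n s r i + u (cc n s)" "Qs n E Vmax s r"
    "\<forall>s'\<in>Xi n E. s' \<noteq> s \<longrightarrow> \<not> Qs n E Vmax s' r"
proof -
  have bi: "bias_induced n E Vmax r s" and uniq: "\<And>s'. bias_induced n E Vmax r s' \<Longrightarrow> s' = s"
    using rP unfolding P_pol_def by auto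
  obtain l0 u0 where e0: "ergodic_eq n E Vmax r l0 u0" and t0: "ptight n s r l0 u0"
    using bi unfolding bias_induced_def ptight_def by blast
  have lam: "lam = l0" unfolding lam_def using game_value_eq[OF gg n1 e0] .
  then show "lam = cm n s r" using tight_formula(1)[OF gg sX t0] by simp
  have eu: "ergodic_eq n E Vmax r lam u" unfolding u_def using e0 lam by (metis someI)
  obtain s'' where s'': "policy_pair n E s''" "ptight n s'' r lam u" using ergodic_policy[OF gg eu] by blast
  have "bias_induced n E Vmax r s''" unfolding bias_induced_def using s'' eu unfolding ptight_def by blast
  then have "s'' = s" using uniq by blast
  then show "\<forall>i\<in>{1..n}. u i = ps n s r i + u (cc n s)" using tight_formula(2)[OF gg sX] s''(2) by blast
  have pp: "policy_pair n E s" using sX unfolding Xi_def by simp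
  have u0: "\<forall>i\<in>{1..n}. u0 i = ps n s r i + u0 (cc n s)" using tight_formula(2)[OF gg sX t0] .
  have l0: "l0 = cm n s r" using tight_formula(1)[OF gg sX t0] .
  have e1: "ergodic_eq n E Vmax r (cm n s r) (ps n s r)"
    using ergodic_shift[OF gg e0, of "ps n s r" "- u0 (cc n s)"] u0 l0 by simp
  have t1: "ptight n s r (cm n s r) (ps n s r)"
    unfolding ptight_def
  proof
    fix i assume iV: "i\<in>{1..n}"
    have "l0 + u0 i = r (i, s i) + u0 (s i)" using t0 iV unfolding ptight_def by blast
    then show "cm n s r + ps n s r i = r (i, s i) + ps n s r (s i)"
      using u0 iV pp_V[OF gg pp iV] l0 by simp
  qed
  show "Qs n E Vmax s r" unfolding Qs_def using t1 e1 ergodic_iff[OF gg] by blast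
  show "\<forall>s'\<in>Xi n E. s' \<noteq> s \<longrightarrow> \<not> Qs n E Vmax s' r"
  proof (intro ballI impI notI)
    fix s' assume s'X: "s' \<in> Xi n E" and ne: "s' \<noteq> s" and Q: "Qs n E Vmax s' r"
    have pp': "policy_pair n E s'" using s'X unfolding Xi_def by simp
    have "ergodic_eq n E Vmax r (cm n s' r) (ps n s' r)"
      using tight_ergodic[OF gg pp'] Q unfolding Qs_def by blast
    then have "bias_induced n E Vmax r s'" unfolding bias_induced_def using pp' Q unfolding Qs_def ptight_def by blast
    then show False using uniq ne by blast
  qed
qed

lemma cover_edge:
  assumes gg: "game_graph n E Vmax" and n1: "n \<ge> 1" and rU: "r \<in> U_set n E Vmax"
    and e: "(i,j) \<in> E"
  defines "lam \<equiv> game_value n E Vmax r"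
  defines "u \<equiv> SOME u. ergodic_eq n E Vmax r lam u"
  assumes c: "0 < \<bar>r (i,j) - lam + u j - u i\<bar>" "\<bar>r (i,j) - lam + u j - u i\<bar> < \<delta>"
  shows "Bset n E Vmax \<delta> (i,j) r"
proof -
  obtain s where sX: "s \<in> Xi n E" and rP: "r \<in> P_pol n E Vmax s" using rU unfolding U_set_def by blast
  note k = cover_key[OF gg n1 sX rP]
  have iV: "i\<in>{1..n}" and jV: "j \<in> {1..n}" using gg_edge[OF gg e] by auto
  have ceq: "r (i,j) - lam + u j - u i = r (i,j) - theta n s (i,j) r"
    using k(1,2) iV jV unfolding lam_def u_def theta_def by simp
  have "s i \<noteq> j"
  proof
    assume sij: "s i = j"
    have "cm n s r + ps n s r i = r (i, s i) + ps n s r (s i)" using k(3) iV unfolding Qs_def ptight_def by blast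
    then have "r (i,j) - theta n s (i,j) r = 0" using sij unfolding theta_def by simp
    then show False using c ceq by simp
  qed
  then have sG: "s \<in> Good n E (i,j)" unfolding Good_def using sX by simp
  have oth: "\<forall>s'\<in>Good n E (i,j). s' \<noteq> s \<longrightarrow> \<not> Qs n E Vmax s' r"
    using k(4) unfolding Good_def by blast
  have "0 < \<bar>r (i,j) - theta n s (i,j) r\<bar>" "\<bar>r (i,j) - theta n s (i,j) r\<bar> < \<delta>" using c ceq by simp_all
  then show ?thesis unfolding Bset_def using sG k(3) oth by blast
qed

lemma Qs_mono:
  assumes gg: "game_graph n E Vmax" and sG: "s \<in> Good n E e" and eE: "e \<in> E"
    and Q: "Qs n E Vmax s (r(e:=y))"
    and xy: "(fst e \<in> Vmax \<and> x \<le> y) \<or> (fst e \<notin> Vmax \<and> y \<le> x)"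
  shows "Qs n E Vmax s (r(e:=x))"
proof -
  have sX: "s \<in> Xi n E" and ne: "s (fst e) \<noteq> snd e" using sG unfolding Good_def by auto
  have agree: "\<forall>i\<in>{1..n}. (r(e:=x)) (i, s i) = (r(e:=y)) (i, s i)"
  proof
    fix i assume "i\<in>{1..n}"
    have "(i, s i) \<noteq> e" using ne by (metis fst_conv snd_conv)
    then show "(r(e:=x)) (i, s i) = (r(e:=y)) (i, s i)" by simp
  qed
  have fc1: "cm n s (r(e:=x)) = cm n s (r(e:=y))" using formula_cong(1)[OF gg sX, of "r(e:=x)" "r(e:=y)"] agree by blast
  have fc2: "\<forall>i\<in>{1..n}. ps n s (r(e:=x)) i = ps n s (r(e:=y)) i" using formula_cong(2)[OF gg sX, of "r(e:=x)" "r(e:=y)"] agree by blast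
  note fc = fc1 fc2
  have pp: "policy_pair n E s" using sX unfolding Xi_def by simp
  have t: "ptight n s (r(e:=x)) (cm n s (r(e:=x))) (ps n s (r(e:=x)))"
    unfolding ptight_def
  proof
    fix i assume iV: "i\<in>{1..n}"
    have siV: "s i \<in> {1..n}" using pp_V(1)[OF gg pp iV] .
    have "cm n s (r(e:=y)) + ps n s (r(e:=y)) i = (r(e:=y)) (i, s i) + ps n s (r(e:=y)) (s i)"
      using Q iV unfolding Qs_def ptight_def by blast
    moreover have "ps n s (r(e:=x)) i = ps n s (r(e:=y)) i" "ps n s (r(e:=x)) (s i) = ps n s (r(e:=y)) (s i)"
      using fc(2) iV siV by simp_all
    moreover have "(r(e:=x)) (i, s i) = (r(e:=y)) (i, s i)" using agree iV by blast
    ultimately show "cm n s (r(e:=x)) + ps n s (r(e:=x)) i = (r(e:=x)) (i, s i) + ps n s (r(e:=x)) (s i)"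
      using fc(1) by simp
  qed
  have iq: "ineqs E Vmax (r(e:=x)) (cm n s (r(e:=x))) (ps n s (r(e:=x)))"
    unfolding ineqs_def
  proof (intro allI impI conjI)
    fix i j assume ij: "(i,j)\<in>E"
    have iV: "i\<in>{1..n}" and jV: "j\<in>{1..n}" using gg_edge[OF gg ij] by auto
    have old: "(i\<in>Vmax \<longrightarrow> (r(e:=y))(i,j) + ps n s (r(e:=y)) j \<le> cm n s (r(e:=y)) + ps n s (r(e:=y)) i) \<and>
          (i\<notin>Vmax \<longrightarrow> cm n s (r(e:=y)) + ps n s (r(e:=y)) i \<le> (r(e:=y))(i,j) + ps n s (r(e:=y)) j)"
      using Q ij unfolding Qs_def ineqs_def by blast
    have cmq: "cm n s (r(e:=x)) = cm n s (r(e:=y))" using fc by simp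
    have psq: "ps n s (r(e:=x)) i = ps n s (r(e:=y)) i" "ps n s (r(e:=x)) j = ps n s (r(e:=y)) j"
      using fc iV jV by auto
    have rr: "(r(e:=x))(i,j) \<le> (r(e:=y))(i,j) \<or> i \<notin> Vmax" "(r(e:=y))(i,j) \<le> (r(e:=x))(i,j) \<or> i \<in> Vmax"
      using xy by (auto simp: prod_eq_iff)
    show "i \<in> Vmax \<Longrightarrow> (r(e:=x))(i,j) + ps n s (r(e:=x)) j \<le> cm n s (r(e:=x)) + ps n s (r(e:=x)) i"
      using old cmq psq rr by linarith
    show "i \<notin> Vmax \<Longrightarrow> cm n s (r(e:=x)) + ps n s (r(e:=x)) i \<le> (r(e:=x))(i,j) + ps n s (r(e:=x)) j"
      using old cmq psq rr by linarith
  qed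
  show ?thesis unfolding Qs_def using t iq by blast
qed

lemma theta_upd:
  assumes gg: "game_graph n E Vmax" and sG: "s \<in> Good n E e" and eE: "e \<in> E"
  shows "theta n s e (r(e:=x)) = theta n s e r"
proof -
  have sX: "s \<in> Xi n E" and ne: "s (fst e) \<noteq> snd e" using sG unfolding Good_def by auto
  have agree: "\<forall>i\<in>{1..n}. (r(e:=x)) (i, s i) = r (i, s i)"
  proof
    fix i assume "i\<in>{1..n}"
    have "(i, s i) \<noteq> e" using ne by (metis fst_conv snd_conv)
    then show "(r(e:=x)) (i, s i) = r (i, s i)" by simp
  qed
  have fc1: "cm n s (r(e:=x)) = cm n s r" using formula_cong(1)[OF gg sX, of "r(e:=x)" "r"] agree by blast
  have fc2: "\<forall>i\<in>{1..n}. ps n s (r(e:=x)) i = ps n s r i" using formula_cong(2)[OF gg sX, of "r(e:=x)" "r"] agree by blast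
  note fc = fc1 fc2
  have "fst e \<in> {1..n}" "snd e \<in> {1..n}" using gg_edge[OF gg, of "fst e" "snd e"] eE by auto
  then show ?thesis unfolding theta_def using fc by simp
qed

lemma section_small:
  assumes gg: "game_graph n E Vmax" and eE: "e \<in> E"
  shows "\<exists>\<theta>0. \<forall>x. Bset n E Vmax \<delta> e (r(e:=x)) \<longrightarrow> \<bar>x - \<theta>0\<bar> < \<delta>"
proof (cases "\<exists>x0. Bset n E Vmax \<delta> e (r(e:=x0))")
  case False then show ?thesis by blast
next
  case True
  then obtain x0 s0 where s0G: "s0 \<in> Good n E e" and Q0: "Qs n E Vmax s0 (r(e:=x0))"
    and oth0: "\<forall>s'\<in>Good n E e. s' \<noteq> s0 \<longrightarrow> \<not> Qs n E Vmax s' (r(e:=x0))"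
    unfolding Bset_def by blast
  show ?thesis
  proof (intro exI[of _ "theta n s0 e r"] allI impI)
    fix x assume "Bset n E Vmax \<delta> e (r(e:=x))"
    then obtain s1 where s1G: "s1 \<in> Good n E e" and Q1: "Qs n E Vmax s1 (r(e:=x))"
      and cl: "\<bar>(r(e:=x)) e - theta n s1 e (r(e:=x))\<bar> < \<delta>"
      and oth1: "\<forall>s'\<in>Good n E e. s' \<noteq> s1 \<longrightarrow> \<not> Qs n E Vmax s' (r(e:=x))"
      unfolding Bset_def by blast
    have "s1 = s0"
    proof (rule ccontr)
      assume ne: "s1 \<noteq> s0"
      have A: "Qs n E Vmax s0 (r(e:=x))" if "(fst e \<in> Vmax \<and> x \<le> x0) \<or> (fst e \<notin> Vmax \<and> x0 \<le> x)"
        by (rule Qs_mono[OF gg s0G eE Q0 that])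
      have B: "Qs n E Vmax s1 (r(e:=x0))" if "(fst e \<in> Vmax \<and> x0 \<le> x) \<or> (fst e \<notin> Vmax \<and> x \<le> x0)"
        using Qs_mono[OF gg s1G eE _ that, of r] Q1 by simp
      have ne': "s0 \<noteq> s1" using ne by simp
      have nA: "\<not> Qs n E Vmax s0 (r(e:=x))" using oth1 s0G ne' by blast
      have nB: "\<not> Qs n E Vmax s1 (r(e:=x0))" using oth0 s1G ne by blast
      show False
      proof (cases "fst e \<in> Vmax")
        case True
        show False
        proof (cases "x \<le> x0")
          case True then show False using A nA \<open>fst e \<in> Vmax\<close> by blast
        next
          case False then show False using B nB \<open>fst e \<in> Vmax\<close> by simp
        qed
      next
        case False
        show False
        proof (cases "x0 \<le> x")
          case True then show False using A nA \<open>fst e \<notin> Vmax\<close> by blast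
        next
          case False then show False using B nB \<open>fst e \<notin> Vmax\<close> by simp
        qed
      qed
    qed
    then show "\<bar>x - theta n s0 e r\<bar> < \<delta>" using cl theta_upd[OF gg s1G eE] by simp
  qed
qed

lemma pred_eqI: "(f::_\<Rightarrow>real) \<in> borel_measurable N \<Longrightarrow> g \<in> borel_measurable N \<Longrightarrow> Measurable.pred N (\<lambda>z. f z = g z)"
  unfolding pred_def by (rule borel_measurable_eq)
lemma pred_leI: "(f::_\<Rightarrow>real) \<in> borel_measurable N \<Longrightarrow> g \<in> borel_measurable N \<Longrightarrow> Measurable.pred N (\<lambda>z. f z \<le> g z)"
  unfolding pred_def by (rule borel_measurable_le)
lemma pred_lessI: "(f::_\<Rightarrow>real) \<in> borel_measurable N \<Longrightarrow> g \<in> borel_measurable N \<Longrightarrow> Measurable.pred N (\<lambda>z. f z < g z)"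
  unfolding pred_def by (rule borel_measurable_less)

lemma pp_finite:
  assumes gg: "game_graph n E Vmax"
  shows "finite {s. policy_pair n E s}"
proof -
  have "{s. policy_pair n E s} \<subseteq> (\<lambda>g. \<lambda>i. if i\<in>{1..n} then g i else (0::nat)) ` ({1..n} \<rightarrow>\<^sub>E {1..n})"
  proof
    fix s assume "s \<in> {s. policy_pair n E s}"
    then have pp: "policy_pair n E s" by simp
    have "restrict s {1..n} \<in> {1..n} \<rightarrow>\<^sub>E {1..n}" using pp_V(1)[OF gg pp] by auto
    moreover have "s = (\<lambda>i. if i\<in>{1..n} then restrict s {1..n} i else 0)"
      using pp unfolding policy_pair_def by (auto simp: fun_eq_iff)
    ultimately show "s \<in> (\<lambda>g. \<lambda>i. if i\<in>{1..n} then g i else (0::nat)) ` ({1..n} \<rightarrow>\<^sub>E {1..n})" by blast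
  qed
  moreover have "finite ((\<lambda>g. \<lambda>i. if i\<in>{1..n} then g i else (0::nat)) ` ({1..n} \<rightarrow>\<^sub>E {1..n}))"
    by (intro finite_imageI finite_PiE) auto
  ultimately show ?thesis by (rule finite_subset)
qed

lemma Good_finite: assumes gg: "game_graph n E Vmax" shows "finite (Good n E e)"
  by (rule finite_subset[OF _ pp_finite[OF gg]]) (auto simp: Good_def Xi_def)

lemma cm_meas:
  assumes gg: "game_graph n E Vmax" and sX: "s \<in> Xi n E"
    and rm: "\<And>e. e \<in> E \<Longrightarrow> (\<lambda>z. \<rho> z e) \<in> borel_measurable N"
  shows "(\<lambda>z. cm n s (\<rho> z)) \<in> borel_measurable N"
proof -
  have pp: "policy_pair n E s" using sX unfolding Xi_def by simp
  have cV: "cc n s \<in> {1..n}" using cyc_prop[OF gg sX] by auto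
  have "\<And>t. (\<lambda>z. \<rho> z ((s^^t) (cc n s), s ((s^^t) (cc n s)))) \<in> borel_measurable N"
    using rm pp_V(2)[OF gg pp orbit_V[OF gg pp cV]] by blast
  then show ?thesis unfolding cm_def
    by (intro borel_measurable_divide borel_measurable_sum borel_measurable_const) auto
qed

lemma ps_meas:
  assumes gg: "game_graph n E Vmax" and sX: "s \<in> Xi n E" and iV: "i \<in> {1..n}"
    and rm: "\<And>e. e \<in> E \<Longrightarrow> (\<lambda>z. \<rho> z e) \<in> borel_measurable N"
  shows "(\<lambda>z. ps n s (\<rho> z) i) \<in> borel_measurable N"
proof -
  have pp: "policy_pair n E s" using sX unfolding Xi_def by simp
  have "\<And>t. (\<lambda>z. \<rho> z ((s^^t) i, s ((s^^t) i))) \<in> borel_measurable N"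
    using rm pp_V(2)[OF gg pp orbit_V[OF gg pp iV]] by blast
  then show ?thesis unfolding ps_def
    by (intro borel_measurable_diff borel_measurable_sum cm_meas[OF gg sX rm]) auto
qed

lemma ineqs_alt: "ineqs E Vmax r l u \<longleftrightarrow> (\<forall>p\<in>E. (fst p\<in>Vmax \<longrightarrow> r p + u (snd p) \<le> l + u (fst p)) \<and> (fst p \<notin> Vmax \<longrightarrow> l + u (fst p) \<le> r p + u (snd p)))"
  unfolding ineqs_def by auto

lemma Qs_pred:
  assumes gg: "game_graph n E Vmax" and sX: "s \<in> Xi n E"
    and rm: "\<And>e. e \<in> E \<Longrightarrow> (\<lambda>z. \<rho> z e) \<in> borel_measurable N"
  shows "Measurable.pred N (\<lambda>z. Qs n E Vmax s (\<rho> z))"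
proof -
  have pp: "policy_pair n E s" using sX unfolding Xi_def by simp
  have fE: "finite E" using gg_fin[OF gg] .
  note cmm = cm_meas[OF gg sX rm] and psm = ps_meas[OF gg sX _ rm]
  have t: "Measurable.pred N (\<lambda>z. ptight n s (\<rho> z) (cm n s (\<rho> z)) (ps n s (\<rho> z)))"
    unfolding ptight_def
  proof (intro pred_intros_finite(3) finite_atLeastAtMost)
    fix i assume iV: "i \<in> {1..n}"
    show "Measurable.pred N (\<lambda>z. cm n s (\<rho> z) + ps n s (\<rho> z) i = \<rho> z (i, s i) + ps n s (\<rho> z) (s i))"
      by (intro pred_eqI borel_measurable_add cmm psm iV pp_V[OF gg pp iV] rm)
  qed
  have q: "Measurable.pred N (\<lambda>z. ineqs E Vmax (\<rho> z) (cm n s (\<rho> z)) (ps n s (\<rho> z)))"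
    unfolding ineqs_alt
  proof (intro pred_intros_finite(3) fE)
    fix p assume pE: "p \<in> E"
    have V: "fst p \<in> {1..n}" "snd p \<in> {1..n}" using gg_edge[OF gg, of "fst p" "snd p"] pE by auto
    show "Measurable.pred N (\<lambda>z. (fst p\<in>Vmax \<longrightarrow> \<rho> z p + ps n s (\<rho> z) (snd p) \<le> cm n s (\<rho> z) + ps n s (\<rho> z) (fst p)) \<and>
       (fst p \<notin> Vmax \<longrightarrow> cm n s (\<rho> z) + ps n s (\<rho> z) (fst p) \<le> \<rho> z p + ps n s (\<rho> z) (snd p)))"
      by (intro pred_intros_logic measurable_const pred_leI borel_measurable_add cmm psm V rm pE) simp_all
  qed
  show ?thesis unfolding Qs_def by (intro pred_intros_logic t q)
qed

lemma Bset_pred: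
  assumes gg: "game_graph n E Vmax" and eE: "e \<in> E"
    and rm: "\<And>e. e \<in> E \<Longrightarrow> (\<lambda>z. \<rho> z e) \<in> borel_measurable N"
  shows "Measurable.pred N (\<lambda>z. Bset n E Vmax \<delta> e (\<rho> z))"
  unfolding Bset_def
proof (intro pred_intros_finite(4) Good_finite[OF gg])
  fix s assume sG: "s \<in> Good n E e"
  have sX: "s \<in> Xi n E" using sG unfolding Good_def by simp
  have V: "fst e \<in> {1..n}" "snd e \<in> {1..n}" using gg_edge[OF gg, of "fst e" "snd e"] eE by auto
  have th: "(\<lambda>z. theta n s e (\<rho> z)) \<in> borel_measurable N"
    unfolding theta_def by (intro borel_measurable_add borel_measurable_diff cm_meas[OF gg sX rm] ps_meas[OF gg sX _ rm] V)
  have ab: "(\<lambda>z. \<bar>\<rho> z e - theta n s e (\<rho> z)\<bar>) \<in> borel_measurable N"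
    by (intro borel_measurable_abs borel_measurable_diff th rm eE)
  have oth: "Measurable.pred N (\<lambda>z. \<forall>s'\<in>Good n E e. s' \<noteq> s \<longrightarrow> \<not> Qs n E Vmax s' (\<rho> z))"
  proof (intro pred_intros_finite(3) Good_finite[OF gg])
    fix s' assume "s' \<in> Good n E e"
    then have "s' \<in> Xi n E" unfolding Good_def by simp
    then show "Measurable.pred N (\<lambda>z. s' \<noteq> s \<longrightarrow> \<not> Qs n E Vmax s' (\<rho> z))"
      by (intro pred_intros_logic measurable_const Qs_pred[OF gg _ rm]) simp_all
  qed
  show "Measurable.pred N (\<lambda>z. Qs n E Vmax s (\<rho> z) \<and> 0 < \<bar>\<rho> z e - theta n s e (\<rho> z)\<bar> \<and>
      \<bar>\<rho> z e - theta n s e (\<rho> z)\<bar> < \<delta> \<and> (\<forall>s'\<in>Good n E e. s' \<noteq> s \<longrightarrow> \<not> Qs n E Vmax s' (\<rho> z)))"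
    by (intro pred_intros_logic Qs_pred[OF gg sX rm] pred_lessI ab borel_measurable_const oth)
qed

lemma density_interval_bound:
  fixes f :: "real \<Rightarrow> real"
  assumes fm: "(\<lambda>y. ennreal (f y)) \<in> borel_measurable lborel" and fb: "\<forall>y. f y \<le> \<phi>"
    and A: "A \<in> sets borel" and sub: "A \<subseteq> {c-\<delta>..c+\<delta>}" and \<delta>: "\<delta> \<ge> 0" and \<phi>: "\<phi> \<ge> 0"
  shows "emeasure (density lborel (\<lambda>y. ennreal (f y))) A \<le> ennreal (2*\<phi>*\<delta>)"
proof -
  have "emeasure (density lborel (\<lambda>y. ennreal (f y))) A = (\<integral>\<^sup>+x. ennreal (f x) * indicator A x \<partial>lborel)"
    by (rule emeasure_density) (use fm A in auto)
  also have "\<dots> \<le> (\<integral>\<^sup>+x. ennreal \<phi> * indicator {c-\<delta>..c+\<delta>} x \<partial>lborel)"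
    by (intro nn_integral_mono) (use fb sub in \<open>auto split: split_indicator intro: ennreal_leI\<close>)
  also have "\<dots> = ennreal \<phi> * emeasure lborel {c-\<delta>..c+\<delta>}" by (rule nn_integral_cmult_indicator) simp
  also have "\<dots> = ennreal \<phi> * ennreal (2*\<delta>)" using \<delta> by simp
  also have "\<dots> = ennreal (2*\<phi>*\<delta>)" using \<delta> \<phi> by (simp add: ennreal_mult[symmetric] mult.commute mult.left_commute)
  finally show ?thesis .
qed

lemma (in prob_space) indep_section_bound:
  fixes X :: "'a \<Rightarrow> real" and f :: "real \<Rightarrow> real"
  assumes ind: "indep_var S Y T Z"
    and dist: "distributed M lborel X (\<lambda>y. ennreal (f y))"
    and XZ: "\<And>\<omega>. \<omega> \<in> space M \<Longrightarrow> X \<omega> = \<pi> (Z \<omega>)"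
    and fb: "\<forall>y. f y \<le> \<phi>" and \<phi>: "\<phi> \<ge> 0" and \<delta>: "\<delta> \<ge> 0"
    and G: "G \<in> sets (S \<Otimes>\<^sub>M T)"
    and sec: "\<And>y. y\<in>space S \<Longrightarrow> \<exists>c. \<forall>z. (y,z)\<in>G \<longrightarrow> \<bar>\<pi> z - c\<bar> < \<delta>"
  shows "measure M {\<omega>\<in>space M. (Y \<omega>, Z \<omega>) \<in> G} \<le> 2 * \<phi> * \<delta>"
proof -
  have Ym: "random_variable S Y" and Zm: "random_variable T Z"
    using indep_var_rv1[OF ind] indep_var_rv2[OF ind] by auto
  have XYm: "(\<lambda>\<omega>. (Y \<omega>, Z \<omega>)) \<in> measurable M (S \<Otimes>\<^sub>M T)" by (rule measurable_Pair[OF Ym Zm])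
  have eq: "distr M S Y \<Otimes>\<^sub>M distr M T Z = distr M (S \<Otimes>\<^sub>M T) (\<lambda>x. (Y x, Z x))"
    using ind indep_var_distribution_eq by blast
  interpret PY: prob_space "distr M S Y" by (rule prob_space_distr[OF Ym])
  interpret PX: prob_space "distr M T Z" by (rule prob_space_distr[OF Zm])
  have Xl: "X \<in> measurable M lborel" using distributed_measurable[OF dist] .
  have fm: "(\<lambda>y. ennreal (f y)) \<in> borel_measurable lborel" using distributed_borel_measurable[OF dist] .
  have "emeasure M {\<omega>\<in>space M. (Y \<omega>, Z \<omega>) \<in> G} = emeasure (distr M (S \<Otimes>\<^sub>M T) (\<lambda>x. (Y x, Z x))) G"
    by (subst emeasure_distr[OF XYm G]) (auto intro!: arg_cong[where f="emeasure M"])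
  also have "\<dots> = emeasure (distr M S Y \<Otimes>\<^sub>M distr M T Z) G" using eq by simp
  also have "\<dots> = (\<integral>\<^sup>+y. emeasure (distr M T Z) (Pair y -` G) \<partial>distr M S Y)"
    by (rule PX.emeasure_pair_measure_alt) (use G in simp)
  also have "\<dots> \<le> (\<integral>\<^sup>+y. ennreal (2*\<phi>*\<delta>) \<partial>distr M S Y)"
  proof (rule nn_integral_mono)
    fix y assume "y \<in> space (distr M S Y)"
    then have yS: "y \<in> space S" by simp
    obtain c where c: "\<forall>z. (y,z)\<in>G \<longrightarrow> \<bar>\<pi> z - c\<bar> < \<delta>" using sec[OF yS] by blast
    have A: "Pair y -` G \<in> sets T" using sets_Pair1[OF G] .
    have B: "{c-\<delta>..c+\<delta>} \<in> sets borel" by simp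
    have "emeasure (distr M T Z) (Pair y -` G) = emeasure M (Z -` (Pair y -` G) \<inter> space M)"
      by (rule emeasure_distr[OF Zm A])
    also have "\<dots> \<le> emeasure M (X -` {c-\<delta>..c+\<delta>} \<inter> space M)"
    proof (rule emeasure_mono)
      show "Z -` Pair y -` G \<inter> space M \<subseteq> X -` {c - \<delta>..c + \<delta>} \<inter> space M"
        using c XZ by (force simp: abs_less_iff)
      show "X -` {c - \<delta>..c + \<delta>} \<inter> space M \<in> sets M" using Xl B by (simp add: measurable_sets)
    qed
    also have "\<dots> = emeasure (distr M lborel X) {c-\<delta>..c+\<delta>}"
      by (rule emeasure_distr[OF Xl, symmetric]) simp
    also have "\<dots> = emeasure (density lborel (\<lambda>y. ennreal (f y))) {c-\<delta>..c+\<delta>}"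
      using distributed_distr_eq_density[OF dist] by simp
    also have "\<dots> \<le> ennreal (2*\<phi>*\<delta>)"
      by (rule density_interval_bound[OF fm fb B _ \<delta> \<phi>, of c]) simp
    finally show "emeasure (distr M T Z) (Pair y -` G) \<le> ennreal (2*\<phi>*\<delta>)" .
  qed
  also have "\<dots> = ennreal (2*\<phi>*\<delta>)" using PY.emeasure_space_1 by (simp add: nn_integral_const)
  finally have "emeasure M {\<omega>\<in>space M. (Y \<omega>, Z \<omega>) \<in> G} \<le> ennreal (2*\<phi>*\<delta>)" .
  then show ?thesis using \<delta> \<phi> by (simp add: emeasure_eq_measure)
qed

lemma Qs_cong:
  assumes gg: "game_graph n E Vmax" and sX: "s \<in> Xi n E" and eq: "\<forall>e\<in>E. r e = r' e"
  shows "Qs n E Vmax s r = Qs n E Vmax s r'"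
proof -
  have pp: "policy_pair n E s" using sX unfolding Xi_def by simp
  have ag: "\<forall>i\<in>{1..n}. r (i, s i) = r' (i, s i)" using eq pp_V(2)[OF gg pp] by blast
  note fc = formula_cong[OF gg sX ag]
  have t: "ptight n s r (cm n s r) (ps n s r) = ptight n s r' (cm n s r') (ps n s r')"
    unfolding ptight_def
  proof (rule ball_cong[OF refl])
    fix i assume iV: "i \<in> {1..n}"
    show "(cm n s r + ps n s r i = r (i, s i) + ps n s r (s i)) = (cm n s r' + ps n s r' i = r' (i, s i) + ps n s r' (s i))"
      using fc(1) fc(2)[rule_format, OF iV] fc(2)[rule_format, OF pp_V(1)[OF gg pp iV]] ag iV by simp
  qed
  have q: "ineqs E Vmax r (cm n s r) (ps n s r) = ineqs E Vmax r' (cm n s r') (ps n s r')"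
    unfolding ineqs_alt
  proof (rule ball_cong[OF refl])
    fix p assume pE: "p \<in> E"
    have V: "fst p \<in> {1..n}" "snd p \<in> {1..n}" using gg_edge[OF gg, of "fst p" "snd p"] pE by auto
    have e1: "ps n s r (fst p) = ps n s r' (fst p)" "ps n s r (snd p) = ps n s r' (snd p)" "r p = r' p"
      using fc(2) V eq pE by auto
    show "((fst p \<in> Vmax \<longrightarrow> r p + ps n s r (snd p) \<le> cm n s r + ps n s r (fst p)) \<and>
          (fst p \<notin> Vmax \<longrightarrow> cm n s r + ps n s r (fst p) \<le> r p + ps n s r (snd p))) =
          ((fst p \<in> Vmax \<longrightarrow> r' p + ps n s r' (snd p) \<le> cm n s r' + ps n s r' (fst p)) \<and>
          (fst p \<notin> Vmax \<longrightarrow> cm n s r' + ps n s r' (fst p) \<le> r' p + ps n s r' (snd p)))"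
      using e1 fc(1) by simp
  qed
  show ?thesis unfolding Qs_def using t q by simp
qed

lemma theta_cong:
  assumes gg: "game_graph n E Vmax" and sX: "s \<in> Xi n E" and eq: "\<forall>e\<in>E. r e = r' e" and eE: "e \<in> E"
  shows "theta n s e r = theta n s e r'"
proof -
  have pp: "policy_pair n E s" using sX unfolding Xi_def by simp
  have ag: "\<forall>i\<in>{1..n}. r (i, s i) = r' (i, s i)" using eq pp_V(2)[OF gg pp] by blast
  note fc = formula_cong[OF gg sX ag]
  have "fst e \<in> {1..n}" "snd e \<in> {1..n}" using gg_edge[OF gg, of "fst e" "snd e"] eE by auto
  then show ?thesis unfolding theta_def using fc by simp
qed

lemma Bset_cong:
  assumes gg: "game_graph n E Vmax" and eq: "\<forall>e\<in>E. r e = r' e" and eE: "e \<in> E"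
  shows "Bset n E Vmax \<delta> e r = Bset n E Vmax \<delta> e r'"
proof -
  have hq1: "Qs n E Vmax s r = Qs n E Vmax s r' \<and> theta n s e r = theta n s e r'" if sG: "s \<in> Good n E e" for s
  proof -
    have sX: "s \<in> Xi n E" using sG by (simp add: Good_def)
    show ?thesis using Qs_cong[OF gg sX eq] theta_cong[OF gg sX eq eE] by simp
  qed
  have hq2: "r e = r' e" using eq eE by blast
  have oth: "\<And>s. (\<forall>s'\<in>Good n E e. s' \<noteq> s \<longrightarrow> \<not> Qs n E Vmax s' r) = (\<forall>s'\<in>Good n E e. s' \<noteq> s \<longrightarrow> \<not> Qs n E Vmax s' r')"
  proof -
    fix s
    show "(\<forall>s'\<in>Good n E e. s' \<noteq> s \<longrightarrow> \<not> Qs n E Vmax s' r) = (\<forall>s'\<in>Good n E e. s' \<noteq> s \<longrightarrow> \<not> Qs n E Vmax s' r')"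
      by (rule ball_cong[OF refl]) (use hq1 in simp)
  qed
  show ?thesis unfolding Bset_def
  proof (rule bex_cong[OF refl])
    fix s assume sG: "s \<in> Good n E e"
    show "(Qs n E Vmax s r \<and> 0 < \<bar>r e - theta n s e r\<bar> \<and> \<bar>r e - theta n s e r\<bar> < \<delta> \<and> (\<forall>s'\<in>Good n E e. s' \<noteq> s \<longrightarrow> \<not> Qs n E Vmax s' r)) =
          (Qs n E Vmax s r' \<and> 0 < \<bar>r' e - theta n s e r'\<bar> \<and> \<bar>r' e - theta n s e r'\<bar> < \<delta> \<and> (\<forall>s'\<in>Good n E e. s' \<noteq> s \<longrightarrow> \<not> Qs n E Vmax s' r'))"
      using hq1[OF sG] hq2 oth[of s] by simp
  qed
qed

lemma (in prob_space) Bset_event: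
  fixes R :: "'a \<Rightarrow> nat \<times> nat \<Rightarrow> real" and f :: "nat \<times> nat \<Rightarrow> real \<Rightarrow> real"
  assumes gg: "game_graph n E Vmax" and eE: "e \<in> E"
    and ind: "indep_vars (\<lambda>_. borel) (\<lambda>e \<omega>. R \<omega> e) E"
    and dist: "distributed M lborel (\<lambda>\<omega>. R \<omega> e) (\<lambda>y. ennreal (f e y))"
    and fb: "\<forall>y. f e y \<le> \<phi>" and \<phi>: "\<phi> \<ge> 0" and \<delta>: "\<delta> \<ge> 0"
  shows "{\<omega>\<in>space M. Bset n E Vmax \<delta> e (R \<omega>)} \<in> events"
    "measure M {\<omega>\<in>space M. Bset n E Vmax \<delta> e (R \<omega>)} \<le> 2 * \<phi> * \<delta>"
proof -
  have Rm0: "\<forall>i\<in>E. random_variable borel (\<lambda>\<omega>. R \<omega> i)"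
    using ind unfolding indep_vars_def by (rule conjunct1)
  have Rm: "\<And>e'. e' \<in> E \<Longrightarrow> (\<lambda>\<omega>. R \<omega> e') \<in> borel_measurable M"
    using Rm0 by simp
  show "{\<omega>\<in>space M. Bset n E Vmax \<delta> e (R \<omega>)} \<in> events"
    using Bset_pred[OF gg eE Rm, where \<delta>=\<delta>] unfolding pred_def by simp
  let ?S = "PiM (E - {e}) (\<lambda>_. borel :: real measure)"
  let ?Y = "\<lambda>\<omega>. restrict (\<lambda>i. R \<omega> i) (E - {e})"
  let ?T = "PiM {e} (\<lambda>_. borel :: real measure)"
  let ?Z = "\<lambda>\<omega>. restrict (\<lambda>i. R \<omega> i) {e}"
  define mk where "mk = (\<lambda>(y :: nat \<times> nat \<Rightarrow> real) (z :: nat \<times> nat \<Rightarrow> real) e'. if e' = e then z e else y e')"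
  have ind2: "indep_var ?S ?Y ?T ?Z"
    by (rule indep_var_restrict[OF ind]) (use eE in auto)
  define G where "G = {z \<in> space (?S \<Otimes>\<^sub>M ?T). Bset n E Vmax \<delta> e (mk (fst z) (snd z))}"
  have mkm: "\<And>e'. e' \<in> E \<Longrightarrow> (\<lambda>z. mk (fst z) (snd z) e') \<in> borel_measurable (?S \<Otimes>\<^sub>M ?T)"
  proof -
    fix e' assume e'E: "e' \<in> E"
    show "(\<lambda>z. mk (fst z) (snd z) e') \<in> borel_measurable (?S \<Otimes>\<^sub>M ?T)"
    proof (cases "e' = e")
      case True
      have "(\<lambda>z. snd z e) \<in> borel_measurable (?S \<Otimes>\<^sub>M ?T)"
        by (rule measurable_compose[OF measurable_snd measurable_component_singleton]) simp
      then show ?thesis unfolding mk_def using True by simp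
    next
      case False
      have "(\<lambda>z. fst z e') \<in> borel_measurable (?S \<Otimes>\<^sub>M ?T)"
        by (rule measurable_compose[OF measurable_fst measurable_component_singleton]) (use e'E False in simp)
      then show ?thesis unfolding mk_def using False by simp
    qed
  qed
  have Gs: "G \<in> sets (?S \<Otimes>\<^sub>M ?T)"
    using Bset_pred[OF gg eE mkm, where \<delta>=\<delta>] unfolding pred_def G_def by simp
  have sec: "\<exists>c. \<forall>z. (y,z)\<in>G \<longrightarrow> \<bar>z e - c\<bar> < \<delta>" if "y \<in> space ?S" for y
  proof -
    from section_small[OF gg eE, of \<delta> "mk y (\<lambda>_. 0)"]
    obtain c where c: "\<forall>x. Bset n E Vmax \<delta> e ((mk y (\<lambda>_. 0))(e:=x)) \<longrightarrow> \<bar>x - c\<bar> < \<delta>" ..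
    have mk: "\<And>z. mk y z = (mk y (\<lambda>_. 0))(e:=z e)" unfolding mk_def by (rule ext) simp
    show ?thesis
    proof (intro exI[of _ c] allI impI)
      fix z assume "(y,z) \<in> G"
      then have "Bset n E Vmax \<delta> e (mk y z)" unfolding G_def mem_Collect_eq prod.sel by (rule conjunct2)
      then have "Bset n E Vmax \<delta> e ((mk y (\<lambda>_. 0))(e:=z e))" by (simp only: mk[of z, symmetric])
      then show "\<bar>z e - c\<bar> < \<delta>" using c by blast
    qed
  qed
  have "{\<omega>\<in>space M. Bset n E Vmax \<delta> e (R \<omega>)} = {\<omega>\<in>space M. (?Y \<omega>, ?Z \<omega>) \<in> G}"
  proof -
    have "\<And>\<omega>. Bset n E Vmax \<delta> e (R \<omega>) = Bset n E Vmax \<delta> e (mk (?Y \<omega>) (?Z \<omega>))"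
      by (rule Bset_cong[OF gg _ eE]) (auto simp: mk_def)
    moreover have "\<And>\<omega>. (?Y \<omega>, ?Z \<omega>) \<in> space (?S \<Otimes>\<^sub>M ?T)" by (auto simp: space_pair_measure space_PiM)
    ultimately show ?thesis unfolding G_def by auto
  qed
  also have "measure M \<dots> \<le> 2 * \<phi> * \<delta>"
    by (rule indep_section_bound[OF ind2 dist _ fb \<phi> \<delta> Gs sec]) simp
  finally show "measure M {\<omega>\<in>space M. Bset n E Vmax \<delta> e (R \<omega>)} \<le> 2 * \<phi> * \<delta>" .
qed

lemma lam_bounds:
  assumes gg: "game_graph n E Vmax" and n1: "n \<ge> 1" and h: "ergodic_eq n E Vmax r l u"
  shows "\<exists>e\<in>E. r e \<le> l" "\<exists>e\<in>E. l \<le> r e"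
proof -
  have ex: "\<forall>i\<in>{1..n}. \<exists>j. (i,j)\<in>E \<and> l + u i = r(i,j) + u j" using h ergodic_iff[OF gg] by blast
  have fV: "finite (u ` {1..n})" by simp
  have neV: "u ` {1..n} \<noteq> {}" using n1 by auto
  obtain i where iV: "i\<in>{1..n}" and imax: "\<forall>k\<in>{1..n}. u k \<le> u i"
    using Max_in[OF fV neV] Max_ge[OF fV] by fastforce
  obtain j where j: "(i,j)\<in>E" "l + u i = r(i,j) + u j" using ex iV by blast
  have "u j \<le> u i" using imax gg_edge(2)[OF gg j(1)] by blast
  then show "\<exists>e\<in>E. l \<le> r e" using j by (intro bexI[of _ "(i,j)"]) auto
  obtain i' where iV': "i'\<in>{1..n}" and imin: "\<forall>k\<in>{1..n}. u i' \<le> u k"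
    using Min_in[OF fV neV] Min_le[OF fV] by fastforce
  obtain j' where j': "(i',j')\<in>E" "l + u i' = r(i',j') + u j'" using ex iV' by blast
  have "u i' \<le> u j'" using imin gg_edge(2)[OF gg j'(1)] by blast
  then show "\<exists>e\<in>E. r e \<le> l" using j' by (intro bexI[of _ "(i',j')"]) auto
qed

lemma cover_main:
  assumes gg: "game_graph n E Vmax" and n1: "n \<ge> 1" and rU: "r \<in> U_set n E Vmax"
    and K1: "1 < K" and T: "\<forall>e\<in>E. \<forall>e'\<in>E. \<bar>r e - r e'\<bar> < T"
    and big: "K \<le> cond_number n E Vmax r"
  shows "\<exists>e\<in>E. Bset n E Vmax (T/K) e r"
proof -
  obtain s where sX: "s \<in> Xi n E" and rP: "r \<in> P_pol n E Vmax s" using rU unfolding U_set_def by blast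
  obtain l0 u0 where e0: "ergodic_eq n E Vmax r l0 u0"
    using rP unfolding P_pol_def bias_induced_def by blast
  define lam where "lam = game_value n E Vmax r"
  define u where "u = (SOME u. ergodic_eq n E Vmax r lam u)"
  define S where "S = {\<bar>r (i, j) - lam + u j - u i\<bar> | i j. (i, j) \<in> E \<and> r (i, j) - lam + u j - u i \<noteq> 0}"
  have lam0: "lam = l0" unfolding lam_def by (rule game_value_eq[OF gg n1 e0])
  have cn: "cond_number n E Vmax r = (if S = {} then 1 else Max {\<bar>r e - lam\<bar> | e. e \<in> E} / Min S)"
    unfolding cond_number_def Let_def lam_def u_def S_def by simp
  have Sne: "S \<noteq> {}"
  proof
    assume "S = {}" then have "cond_number n E Vmax r = 1" using cn by simp
    then show False using big K1 by simp
  qed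
  have fE: "finite E" by (rule gg_fin[OF gg])
  have nE: "E \<noteq> {}" using gg n1 unfolding game_graph_def by fastforce
  let ?N = "Max {\<bar>r e - lam\<bar> | e. e \<in> E}"
  have "{\<bar>r e - lam\<bar> | e. e \<in> E} = (\<lambda>e. \<bar>r e - lam\<bar>) ` E" by blast
  then have fN: "finite {\<bar>r e - lam\<bar> | e. e \<in> E}" using fE by simp
  have neN: "{\<bar>r e - lam\<bar> | e. e \<in> E} \<noteq> {}" using nE by blast
  obtain e0 where e0E: "e0 \<in> E" and Neq: "?N = \<bar>r e0 - lam\<bar>" using Max_in[OF fN neN] by blast
  obtain e1 where e1: "e1 \<in> E" "r e1 \<le> lam" using lam_bounds(1)[OF gg n1 e0] lam0 by blast
  obtain e2 where e2: "e2 \<in> E" "lam \<le> r e2" using lam_bounds(2)[OF gg n1 e0] lam0 by blast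
  have "\<bar>r e0 - r e1\<bar> < T" "\<bar>r e0 - r e2\<bar> < T" using T e0E e1(1) e2(1) by blast+
  then have NT: "?N < T" using Neq e1(2) e2(2) by linarith
  have fS: "finite S"
  proof -
    have "S \<subseteq> (\<lambda>p. \<bar>r p - lam + u (snd p) - u (fst p)\<bar>) ` E" unfolding S_def by force
    then show ?thesis using fE by (meson finite_imageI finite_subset)
  qed
  have minS: "Min S \<in> S" using Min_in[OF fS Sne] .
  then obtain i j where ij: "(i,j)\<in>E" "Min S = \<bar>r (i, j) - lam + u j - u i\<bar>" "r (i, j) - lam + u j - u i \<noteq> 0"
    unfolding S_def by blast
  have mpos: "0 < Min S" using ij by simp
  have "K \<le> ?N / Min S" using big cn Sne by simp
  then have "K * Min S \<le> ?N" using mpos by (simp add: le_divide_eq)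
  then have "Min S < T / K" using NT K1 by (simp add: less_divide_eq mult.commute)
  then have "0 < \<bar>r (i, j) - lam + u j - u i\<bar>" "\<bar>r (i, j) - lam + u j - u i\<bar> < T/K" using ij by auto
  then have "Bset n E Vmax (T/K) (i,j) r"
    using cover_edge[OF gg n1 rU ij(1)] unfolding lam_def u_def by blast
  then show ?thesis using ij(1) by blast
qed

theorem mainTheorem15:
  fixes n :: nat and E :: "(nat \<times> nat) set" and Vmax :: "nat set"
    and M :: "'a measure" and R :: "'a \<Rightarrow> nat \<times> nat \<Rightarrow> real"
    and f :: "nat \<times> nat \<Rightarrow> real \<Rightarrow> real" and \<phi> :: real
  assumes "n \<ge> 1"
    and "game_graph n E Vmax"
    and "ergodic_graph n E Vmax"
    and "prob_space M"
    and "prob_space.indep_vars M (\<lambda>_. borel) (\<lambda>e \<omega>. R \<omega> e) E"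
    and "\<forall>e\<in>E. distributed M lborel (\<lambda>\<omega>. R \<omega> e) (\<lambda>y. ennreal (f e y))"
    and "\<phi> > 0"
    and "\<forall>e\<in>E. \<forall>y. 0 \<le> f e y \<and> f e y \<le> \<phi>"
    and "\<forall>e\<in>E. integrable M (\<lambda>\<omega>. (R \<omega> e)\<^sup>2)"
    and "\<forall>e\<in>E. integral\<^sup>L M (\<lambda>\<omega>. R \<omega> e) \<in> {-1..1}"
    and "\<forall>e\<in>E. integral\<^sup>L M (\<lambda>\<omega>. (R \<omega> e - integral\<^sup>L M (\<lambda>\<omega>. R \<omega> e))\<^sup>2) \<le> 1 / \<phi>\<^sup>2"
  shows "(\<forall>\<epsilon>>0. \<exists>A\<in>sets M.
            {\<omega>\<in>space M. R \<omega> \<in> U_set n E Vmax \<and>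
               cond_number n E Vmax (R \<omega>) \<ge> 8 * real (card E) / \<epsilon> * (\<phi> + sqrt (2 * real (card E) / \<epsilon>))}
              \<subseteq> A \<and> measure M A \<le> \<epsilon>)
       \<and> (\<exists>A\<in>sets M.
            {\<omega>\<in>space M. R \<omega> \<in> U_set n E Vmax \<and>
               cond_number n E Vmax (R \<omega>) \<ge> 8 * real n * real (card E) * (\<phi> + sqrt (2 * real n * real (card E)))}
              \<subseteq> A \<and> measure M A \<le> 1 / real n)"
proof -
  interpret prob_space M by fact
  have gg: "game_graph n E Vmax" by fact
  have n1: "n \<ge> 1" by fact
  have ind: "indep_vars (\<lambda>_. borel) (\<lambda>e \<omega>. R \<omega> e) E" by fact
  have \<phi>0: "\<phi> > 0" by fact
  have fE: "finite E" by (rule gg_fin[OF gg])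
  have nE: "E \<noteq> {}" using gg n1 unfolding game_graph_def by fastforce
  have m1: "real (card E) \<ge> 1" using fE nE by (simp add: Suc_leI card_gt_0_iff)
  have Rm0: "\<forall>i\<in>E. random_variable borel (\<lambda>\<omega>. R \<omega> i)"
    using ind unfolding indep_vars_def by (rule conjunct1)
  have Rm: "\<And>e. e \<in> E \<Longrightarrow> (\<lambda>\<omega>. R \<omega> e) \<in> borel_measurable M" using Rm0 by simp
  have main: "\<forall>\<epsilon>>0. \<exists>A\<in>sets M.
            {\<omega>\<in>space M. R \<omega> \<in> U_set n E Vmax \<and>
               cond_number n E Vmax (R \<omega>) \<ge> 8 * real (card E) / \<epsilon> * (\<phi> + sqrt (2 * real (card E) / \<epsilon>))}
              \<subseteq> A \<and> measure M A \<le> \<epsilon>"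
  proof (intro allI impI)
    fix \<epsilon> :: real assume \<epsilon>: "\<epsilon> > 0"
    show "\<exists>A\<in>sets M.
            {\<omega>\<in>space M. R \<omega> \<in> U_set n E Vmax \<and>
               cond_number n E Vmax (R \<omega>) \<ge> 8 * real (card E) / \<epsilon> * (\<phi> + sqrt (2 * real (card E) / \<epsilon>))}
              \<subseteq> A \<and> measure M A \<le> \<epsilon>"
    proof (cases "\<epsilon> \<ge> 1")
      case True
      have "measure M (space M) \<le> \<epsilon>" using True prob_space by simp
      then show ?thesis by (intro bexI[of _ "space M"]) auto
    next
      case False
      then have \<epsilon>1: "\<epsilon> < 1" by simp
      define m where "m = real (card E)"
      define s where "s = sqrt (2 * m / \<epsilon>)"
      define t where "t = s / \<phi>"
      define T where "T = 2 + 2 * t"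
      define K where "K = 8 * m / \<epsilon> * (\<phi> + s)"
      define \<delta> where "\<delta> = T / K"
      define \<mu> where "\<mu> e = integral\<^sup>L M (\<lambda>\<omega>. R \<omega> e)" for e
      define A0 where "A0 = (\<Union>e\<in>E. {\<omega>\<in>space M. t \<le> \<bar>R \<omega> e - \<mu> e\<bar>})"
      define A1 where "A1 = (\<Union>e\<in>E. {\<omega>\<in>space M. Bset n E Vmax \<delta> e (R \<omega>)})"
      have m1': "m \<ge> 1" using m1 unfolding m_def .
      have s2: "s^2 = 2 * m / \<epsilon>" unfolding s_def using m1' \<epsilon> by simp
      have s1: "s \<ge> 1" unfolding s_def using m1' \<epsilon> \<epsilon>1 by (simp add: le_divide_eq)
      have t0: "t > 0" unfolding t_def using s1 \<phi>0 by simp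
      have T0: "T > 0" unfolding T_def using t0 by simp
      have K1: "K > 1"
      proof -
        have "8 * m / \<epsilon> \<ge> 8" using m1' \<epsilon> \<epsilon>1 by (simp add: le_divide_eq)
        moreover have "\<phi> + s > 1" using s1 \<phi>0 by simp
        ultimately have "8 * m / \<epsilon> * (\<phi> + s) \<ge> 8 * 1" by (intro mult_mono) auto
        then show ?thesis unfolding K_def by simp
      qed
      have \<delta>0: "\<delta> > 0" unfolding \<delta>_def using T0 K1 by simp
      have A0s: "A0 \<in> sets M" unfolding A0_def
        by (intro sets.finite_UN fE ballI borel_measurable_le borel_measurable_const borel_measurable_abs borel_measurable_diff Rm)
      have Bev: "{\<omega>\<in>space M. Bset n E Vmax \<delta> e (R \<omega>)} \<in> events \<and>
          measure M {\<omega>\<in>space M. Bset n E Vmax \<delta> e (R \<omega>)} \<le> 2 * \<phi> * \<delta>" if eE: "e \<in> E" for e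
      proof -
        have d: "distributed M lborel (\<lambda>\<omega>. R \<omega> e) (\<lambda>y. ennreal (f e y))" using assms(6) eE by blast
        have fb: "\<forall>y. f e y \<le> \<phi>" using assms(8) eE by blast
        have p0: "\<phi> \<ge> 0" "\<delta> \<ge> 0" using \<phi>0 \<delta>0 by auto
        show ?thesis using Bset_event[where R=R and f=f and e=e and \<delta>=\<delta> and \<phi>=\<phi>, OF gg eE ind d fb p0] by blast
      qed
      have A1s: "A1 \<in> sets M" unfolding A1_def
        using Bev by (intro sets.finite_UN fE ballI) auto
      have mA0: "measure M A0 \<le> \<epsilon> / 2"
      proof -
        have "measure M A0 \<le> (\<Sum>e\<in>E. measure M {\<omega>\<in>space M. t \<le> \<bar>R \<omega> e - \<mu> e\<bar>})"
          unfolding A0_def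
          by (intro measure_UNION_le fE borel_measurable_le borel_measurable_const borel_measurable_abs borel_measurable_diff Rm)
        also have "\<dots> \<le> (\<Sum>e\<in>E. (1/\<phi>\<^sup>2) / t\<^sup>2)"
        proof (rule sum_mono)
          fix e assume eE: "e \<in> E"
          have "measure M {\<omega>\<in>space M. t \<le> \<bar>R \<omega> e - \<mu> e\<bar>} \<le> variance (\<lambda>\<omega>. R \<omega> e) / t\<^sup>2"
            unfolding \<mu>_def using Chebyshev_inequality[of "\<lambda>\<omega>. R \<omega> e" t] Rm[OF eE] assms(9) eE t0 by simp
          also have "\<dots> \<le> (1/\<phi>\<^sup>2) / t\<^sup>2"
          proof (rule divide_right_mono)
            show "variance (\<lambda>\<omega>. R \<omega> e) \<le> 1/\<phi>\<^sup>2" using assms(11) eE by blast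
          qed simp
          finally show "measure M {\<omega>\<in>space M. t \<le> \<bar>R \<omega> e - \<mu> e\<bar>} \<le> (1/\<phi>\<^sup>2) / t\<^sup>2" .
        qed
        also have "\<dots> = m * ((1/\<phi>\<^sup>2) / t\<^sup>2)" unfolding m_def by simp
        also have "\<dots> = \<epsilon> / 2"
        proof -
          have "t\<^sup>2 = s\<^sup>2 / \<phi>\<^sup>2" unfolding t_def by (simp add: power_divide)
          then have "(1/\<phi>\<^sup>2) / t\<^sup>2 = 1 / s\<^sup>2" using \<phi>0 s1 by (simp add: field_simps)
          then show ?thesis using s2 m1' \<epsilon> by (simp add: field_simps)
        qed
        finally show ?thesis .
      qed
      have mA1: "measure M A1 \<le> \<epsilon> / 2"
      proof -
        have "measure M A1 \<le> (\<Sum>e\<in>E. measure M {\<omega>\<in>space M. Bset n E Vmax \<delta> e (R \<omega>)})"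
          unfolding A1_def using Bev by (intro measure_UNION_le fE) auto
        also have "\<dots> \<le> (\<Sum>e\<in>E. 2 * \<phi> * \<delta>)"
          using Bev by (intro sum_mono) auto
        also have "\<dots> = m * (2 * \<phi> * \<delta>)" unfolding m_def by simp
        also have "\<dots> = \<epsilon> / 2"
        proof -
          have a: "2*\<phi>*T = 4*(\<phi>+s)" unfolding T_def t_def using \<phi>0 by (simp add: field_simps)
          have b: "K * (\<epsilon>/2) = m * (4*(\<phi>+s))" unfolding K_def using \<epsilon> by (simp add: field_simps)
          have "m * (2 * \<phi> * \<delta>) = m * (2*\<phi>*T) / K" unfolding \<delta>_def by simp
          also have "\<dots> = K * (\<epsilon>/2) / K" using a b by simp
          also have "\<dots> = \<epsilon>/2" using K1 by simp
          finally show ?thesis .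
        qed
        finally show ?thesis .
      qed
      have cover: "{\<omega>\<in>space M. R \<omega> \<in> U_set n E Vmax \<and>
               cond_number n E Vmax (R \<omega>) \<ge> 8 * real (card E) / \<epsilon> * (\<phi> + sqrt (2 * real (card E) / \<epsilon>))}
              \<subseteq> A0 \<union> A1"
      proof
        fix \<omega> assume "\<omega> \<in> {\<omega>\<in>space M. R \<omega> \<in> U_set n E Vmax \<and>
               cond_number n E Vmax (R \<omega>) \<ge> 8 * real (card E) / \<epsilon> * (\<phi> + sqrt (2 * real (card E) / \<epsilon>))}"
        then have \<omega>: "\<omega> \<in> space M" "R \<omega> \<in> U_set n E Vmax" "K \<le> cond_number n E Vmax (R \<omega>)"
          unfolding K_def s_def m_def by auto
        show "\<omega> \<in> A0 \<union> A1"
        proof (cases "\<omega> \<in> A0")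
          case True then show ?thesis by simp
        next
          case False
          then have small: "\<forall>e\<in>E. \<bar>R \<omega> e - \<mu> e\<bar> < t" unfolding A0_def using \<omega>(1) by force
          have mu1: "\<forall>e\<in>E. \<bar>\<mu> e\<bar> \<le> 1" using assms(10) unfolding \<mu>_def by auto
          have TT: "\<forall>e\<in>E. \<forall>e'\<in>E. \<bar>R \<omega> e - R \<omega> e'\<bar> < T"
          proof (intro ballI)
            fix e e' assume "e \<in> E" "e' \<in> E"
            then have "\<bar>R \<omega> e - \<mu> e\<bar> < t" "\<bar>R \<omega> e' - \<mu> e'\<bar> < t" "\<bar>\<mu> e\<bar> \<le> 1" "\<bar>\<mu> e'\<bar> \<le> 1"
              using small mu1 by auto
            then show "\<bar>R \<omega> e - R \<omega> e'\<bar> < T" unfolding T_def by linarith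
          qed
          obtain e where "e \<in> E" "Bset n E Vmax (T/K) e (R \<omega>)"
            using cover_main[OF gg n1 \<omega>(2) K1 TT \<omega>(3)] by blast
          then have "\<omega> \<in> A1" unfolding A1_def \<delta>_def using \<omega>(1) by blast
          then show ?thesis by simp
        qed
      qed
      have "measure M (A0 \<union> A1) \<le> measure M A0 + measure M A1" by (rule measure_Un_le[OF A0s A1s])
      then have "measure M (A0 \<union> A1) \<le> \<epsilon>" using mA0 mA1 by simp
      then show ?thesis using cover A0s A1s by (intro bexI[of _ "A0 \<union> A1"]) auto
    qed
  qed
  have n0: "real n > 0" using n1 by simp
  obtain A where A: "A \<in> sets M" "{\<omega>\<in>space M. R \<omega> \<in> U_set n E Vmax \<and>
               cond_number n E Vmax (R \<omega>) \<ge> 8 * real (card E) / (1 / real n) * (\<phi> + sqrt (2 * real (card E) / (1 / real n)))}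
              \<subseteq> A" "measure M A \<le> 1 / real n"
    using main[rule_format, of "1 / real n"] n0 by auto
  have e1: "8 * real (card E) / (1 / real n) = 8 * real n * real (card E)" by simp
  have e2: "2 * real (card E) / (1 / real n) = 2 * real n * real (card E)" by simp
  have "\<exists>A\<in>sets M.
            {\<omega>\<in>space M. R \<omega> \<in> U_set n E Vmax \<and>
               cond_number n E Vmax (R \<omega>) \<ge> 8 * real n * real (card E) * (\<phi> + sqrt (2 * real n * real (card E)))}
              \<subseteq> A \<and> measure M A \<le> 1 / real n"
    using A unfolding e1 e2 by blast
  then show ?thesis using main by blast
qed

end
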